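(* Let $X$ be a Hausdorff hereditarily disconnected space. Then $\mathcal{K}(X)$ contains a connected set with more than one point if and only if there exist a closed subset $F\subset X$ and a compact subset $K\subsetneq F$ such that $K$ intersects every quasicomponent of $F$.
   Context: $\mathcal{K}(X)$ is the set of nonempty compact subsets of $X$ with the Vietoris topology (generated by $U^+=\{A: A\subset U\}$ and $U^-=\{A: A\cap U\neq\emptyset\}$ for $U$ open in $X$). A space is hereditarily disconnected if every nonempty connected subset is a singleton. The quasicomponent of a space $F$ at $p\in F$ is the intersection of all clopen subsets of $F$ containing $p$. *)

theory Defs
  imports "HOL-Analysis.Analysis"
begin

definition hyperspace_K :: "'a topology \<Rightarrow> 'a set set" where
  "hyperspace_K X = {A. A \<noteq> {} \<and> compactin X A}"

definition vietoris :: "'a topology \<Rightarrow> 'a set topology" where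
  "vietoris X = topology_generated_by
     ({{A \<in> hyperspace_K X. A \<subseteq> U} | U. openin X U} \<union>
      {{A \<in> hyperspace_K X. A \<inter> U \<noteq> {}} | U. openin X U})"

definition hereditarily_disconnected_space :: "'a topology \<Rightarrow> bool" where
  "hereditarily_disconnected_space X \<longleftrightarrow>
     (\<forall>S. S \<subseteq> topspace X \<and> S \<noteq> {} \<and> connectedin X S \<longrightarrow> (\<exists>x. S = {x}))"

end

theory Submission
  imports Defs
begin

lemma topspace_vietoris: "topspace (vietoris X) \<subseteq> hyperspace_K X"
  unfolding vietoris_def by auto

lemma openin_vietoris_plus: "openin X U \<Longrightarrow> openin (vietoris X) {A \<in> hyperspace_K X. A \<subseteq> U}"
  unfolding vietoris_def by (rule topology_generated_by_Basis) blast

lemma openin_vietoris_minus: "openin X U \<Longrightarrow> openin (vietoris X) {A \<in> hyperspace_K X. A \<inter> U \<noteq> {}}"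
  unfolding vietoris_def by (rule topology_generated_by_Basis) blast

lemma preimage_open:
  assumes K: "compactin X K" and KF: "K \<subseteq> F" and F: "F \<subseteq> topspace X"
    and E: "openin (vietoris X) E"
  shows "openin (subtopology X F) {x \<in> F. K \<union> {x} \<in> E}"
proof -
  have "generate_topology_on
     ({{A \<in> hyperspace_K X. A \<subseteq> U} | U. openin X U} \<union>
      {{A \<in> hyperspace_K X. A \<inter> U \<noteq> {}} | U. openin X U}) E"
    using E unfolding vietoris_def by (simp add: openin_topology_generated_by_iff)
  then show ?thesis
  proof (induction rule: generate_topology_on.induct)
    case Empty
    then show ?case by simp
  next
    case (Int a b)
    have "{x \<in> F. K \<union> {x} \<in> a \<inter> b} = {x \<in> F. K \<union> {x} \<in> a} \<inter> {x \<in> F. K \<union> {x} \<in> b}" by auto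
    then show ?case using Int by (simp add: openin_Int)
  next
    case (UN KK)
    have eq: "{x \<in> F. K \<union> {x} \<in> \<Union>KK} = (\<Union>k\<in>KK. {x \<in> F. K \<union> {x} \<in> k})" by auto
    show ?case unfolding eq by (rule openin_Union) (use UN in auto)
  next
    case (Basis s)
    have hk: "x \<in> F \<Longrightarrow> K \<union> {x} \<in> hyperspace_K X" for x
    proof -
      assume "x \<in> F"
      then have "compactin X (K \<union> {x})" using K F by (intro compactin_Un) auto
      then show ?thesis by (simp add: hyperspace_K_def)
    qed
    from Basis show ?case
    proof
      assume "s \<in> {{A \<in> hyperspace_K X. A \<subseteq> U} | U. openin X U}"
      then obtain U where U: "openin X U" "s = {A \<in> hyperspace_K X. A \<subseteq> U}" by blast
      show ?thesis
      proof (cases "K \<subseteq> U")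
        case True
        then have "{x \<in> F. K \<union> {x} \<in> s} = U \<inter> F" using U hk KF by auto
        then show ?thesis using U by (auto simp: openin_subtopology)
      next
        case False
        then have eq: "{x \<in> F. K \<union> {x} \<in> s} = {}" using U by auto
        show ?thesis unfolding eq by simp
      qed
    next
      assume "s \<in> {{A \<in> hyperspace_K X. A \<inter> U \<noteq> {}} | U. openin X U}"
      then obtain U where U: "openin X U" "s = {A \<in> hyperspace_K X. A \<inter> U \<noteq> {}}" by blast
      show ?thesis
      proof (cases "K \<inter> U \<noteq> {}")
        case True
        then have "{x \<in> F. K \<union> {x} \<in> s} = F" using U hk by auto
        then show ?thesis using F by (simp add: openin_subtopology_refl)
      next
        case False
        then have "{x \<in> F. K \<union> {x} \<in> s} = U \<inter> F" using U hk by auto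
        then show ?thesis using U by (auto simp: openin_subtopology)
      qed
    qed
  qed
qed

lemma backward:
  assumes F: "closedin X F" and K: "compactin X K" and KF: "K \<subset> F"
    and Q: "\<forall>Q \<in> quasi_components_of (subtopology X F). K \<inter> Q \<noteq> {}"
  shows "\<exists>C. connectedin (vietoris X) C \<and> (\<exists>A B. A \<in> C \<and> B \<in> C \<and> A \<noteq> B)"
proof -
  have Fs: "F \<subseteq> topspace X" using F closedin_subset by blast
  have KF': "K \<subseteq> F" using KF by auto
  have tF: "topspace (subtopology X F) = F" using Fs by auto
  have qk: "\<exists>k\<in>K. quasi_component_of (subtopology X F) x k" if "x \<in> F" for x
  proof -
    have "quasi_component_of_set (subtopology X F) x \<in> quasi_components_of (subtopology X F)"
      using that tF by (simp add: quasi_components_of_def)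
    then show ?thesis using Q by blast
  qed
  obtain p where p: "p \<in> F" "p \<notin> K" using KF by auto
  obtain k0 where k0: "k0 \<in> K" using qk[OF p(1)] by blast
  define C where "C = (\<lambda>x. K \<union> {x}) ` F"
  have hk: "K \<union> {x} \<in> hyperspace_K X" if "x \<in> F" for x
  proof -
    have "compactin X (K \<union> {x})" using K Fs that by (intro compactin_Un) auto
    then show ?thesis by (simp add: hyperspace_K_def)
  qed
  have Ctop: "C \<subseteq> topspace (vietoris X)"
  proof
    fix D assume "D \<in> C"
    then obtain x where x: "x \<in> F" "D = K \<union> {x}" unfolding C_def by blast
    have "D \<in> {A \<in> hyperspace_K X. A \<subseteq> topspace X}" using hk[OF x(1)] x Fs KF' by auto
    then show "D \<in> topspace (vietoris X)"
      using openin_vietoris_plus[OF openin_topspace[of X]] openin_subset by blast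
  qed
  have conn: "connectedin (vietoris X) C"
    unfolding connectedin
  proof (intro conjI Ctop notI, elim exE conjE)
    fix E1 E2
    assume o1: "openin (vietoris X) E1" and o2: "openin (vietoris X) E2"
      and cov: "C \<subseteq> E1 \<union> E2" and dis: "E1 \<inter> E2 \<inter> C = {}"
      and n1: "E1 \<inter> C \<noteq> {}" and n2: "E2 \<inter> C \<noteq> {}"
    define P1 where "P1 = {x \<in> F. K \<union> {x} \<in> E1}"
    define P2 where "P2 = {x \<in> F. K \<union> {x} \<in> E2}"
    have op1: "openin (subtopology X F) P1" unfolding P1_def by (rule preimage_open[OF K KF' Fs o1])
    have op2: "openin (subtopology X F) P2" unfolding P2_def by (rule preimage_open[OF K KF' Fs o2])
    have P12: "P1 = F - P2" using cov dis unfolding P1_def P2_def C_def by blast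
    have P21: "P2 = F - P1" using cov dis unfolding P1_def P2_def C_def by blast
    have cl1: "closedin (subtopology X F) P1" using op2 P12 tF by (metis closedin_diff closedin_topspace)
    have cl2: "closedin (subtopology X F) P2" using op1 P21 tF by (metis closedin_diff closedin_topspace)
    have "K \<in> E1"
    proof -
      obtain x where x: "x \<in> P1" using n1 unfolding P1_def C_def by blast
      then have "x \<in> F" unfolding P1_def by auto
      then obtain k where k: "k \<in> K" "quasi_component_of (subtopology X F) x k" using qk by blast
      then have "k \<in> P1" using x op1 cl1 by (auto simp: quasi_component_of)
      then show ?thesis using k(1) unfolding P1_def by (simp add: insert_absorb)
    qed
    moreover have "K \<in> E2"
    proof -
      obtain x where x: "x \<in> P2" using n2 unfolding P2_def C_def by blast
      then have "x \<in> F" unfolding P2_def by auto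
      then obtain k where k: "k \<in> K" "quasi_component_of (subtopology X F) x k" using qk by blast
      then have "k \<in> P2" using x op2 cl2 by (auto simp: quasi_component_of)
      then show ?thesis using k(1) unfolding P2_def by (simp add: insert_absorb)
    qed
    moreover have "K \<in> C" unfolding C_def using k0 KF' by (auto intro!: image_eqI[where x=k0] simp: insert_absorb)
    ultimately show False using dis by blast
  qed
  have "K \<in> C" unfolding C_def using k0 KF' by (auto intro!: image_eqI[where x=k0] simp: insert_absorb)
  moreover have "K \<union> {p} \<in> C" unfolding C_def using p by blast
  moreover have "K \<noteq> K \<union> {p}" using p by auto
  ultimately show ?thesis using conn by blast
qed

lemma forward:
  assumes conn: "connectedin (vietoris X) C" and A: "A \<in> C" and B: "B \<in> C"
    and p: "p \<in> A" "p \<notin> B"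
  shows "\<exists>F K. closedin X F \<and> compactin X K \<and> K \<subset> F \<and>
            (\<forall>Q \<in> quasi_components_of (subtopology X F). K \<inter> Q \<noteq> {})"
proof -
  have Chk: "C \<subseteq> hyperspace_K X" using conn topspace_vietoris connectedin_subset_topspace by blast
  have CX: "\<Union>C \<subseteq> topspace X" using Chk by (auto simp: hyperspace_K_def dest: compactin_subset_topspace)
  define F where "F = X closure_of (\<Union>C)"
  have Fc: "closedin X F" unfolding F_def by simp
  have Fs: "F \<subseteq> topspace X" unfolding F_def by (rule closure_of_subset_topspace)
  have CF: "\<Union>C \<subseteq> F" unfolding F_def using CX by (rule closure_of_subset)
  have tF: "topspace (subtopology X F) = F" using Fs by auto
  have Bc: "compactin X B" using Chk B by (auto simp: hyperspace_K_def)
  have BF: "B \<subseteq> F" using B CF by auto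
  have "B \<subset> F" using BF p A CF by auto
  moreover have "B \<inter> Q \<noteq> {}" if Qq: "Q \<in> quasi_components_of (subtopology X F)" for Q
  proof
    assume BQ: "B \<inter> Q = {}"
    obtain q where q: "q \<in> F" "Q = quasi_component_of_set (subtopology X F) q"
      using Qq tF by (auto simp: quasi_components_of_def)
    have ex1: "\<exists>T. closedin (subtopology X F) T \<and> openin (subtopology X F) T \<and> q \<in> T \<and> b \<notin> T"
      if "b \<in> B" for b
    proof -
      have "\<not> quasi_component_of (subtopology X F) q b" using that BQ q by auto
      then show ?thesis using q(1) BF that tF by (auto simp: quasi_component_of)
    qed
    have ex: "\<forall>b\<in>B. \<exists>T. closedin (subtopology X F) T \<and> openin (subtopology X F) T \<and> q \<in> T \<and> b \<notin> T"
      using ex1 by blast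
    obtain T where T': "\<forall>b\<in>B. closedin (subtopology X F) (T b) \<and> openin (subtopology X F) (T b) \<and> q \<in> T b \<and> b \<notin> T b"
      using bchoice[OF ex] by blast
    have T: "\<And>b. b \<in> B \<Longrightarrow> closedin (subtopology X F) (T b) \<and> openin (subtopology X F) (T b) \<and> q \<in> T b \<and> b \<notin> T b"
      using T' by blast
    have "compactin (subtopology X F) B" using Bc BF by (simp add: compactin_subtopology)
    moreover have "\<forall>U \<in> (\<lambda>b. F - T b) ` B. openin (subtopology X F) U"
      using T tF by (metis (no_types, lifting) imageE openin_diff openin_topspace)
    moreover have "B \<subseteq> \<Union>((\<lambda>b. F - T b) ` B)" using T BF by blast
    ultimately obtain G where G: "finite G" "G \<subseteq> (\<lambda>b. F - T b) ` B" "B \<subseteq> \<Union>G"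
      unfolding compactin_def by meson
    define W where "W = F - \<Union>G"
    have Wcl: "closedin (subtopology X F) W"
      unfolding W_def using G(2) \<open>\<forall>U \<in> (\<lambda>b. F - T b) ` B. openin (subtopology X F) U\<close> tF
      by (metis closedin_diff closedin_topspace openin_Union subset_iff)
    have "closedin (subtopology X F) (\<Union>G)"
      using G(1,2) T tF by (intro closedin_Union) (auto simp: openin_closedin_eq)
    then have Wop: "openin (subtopology X F) W" unfolding W_def
      using tF by (metis openin_diff openin_topspace)
    have qW: "q \<in> W" unfolding W_def using G(2) T q(1) by auto
    have BW: "B \<inter> W = {}" unfolding W_def using G(3) by auto
    obtain Uo where Uo: "openin X Uo" "W = Uo \<inter> F" using Wop by (auto simp: openin_subtopology)
    have WX: "closedin X W" using Wcl Fc by (rule closedin_trans_full)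
    define E1 where "E1 = {D \<in> hyperspace_K X. D \<inter> Uo \<noteq> {}}"
    define E2 where "E2 = {D \<in> hyperspace_K X. D \<subseteq> topspace X - W}"
    have o1: "openin (vietoris X) E1" unfolding E1_def using Uo(1) by (rule openin_vietoris_minus)
    have o2: "openin (vietoris X) E2" unfolding E2_def using WX by (intro openin_vietoris_plus) auto
    have DF: "D \<subseteq> F" if "D \<in> C" for D using that CF by auto
    have cov: "C \<subseteq> E1 \<union> E2"
    proof
      fix D assume D: "D \<in> C"
      show "D \<in> E1 \<union> E2"
      proof (cases "D \<inter> W = {}")
        case True then show ?thesis using D Chk DF[OF D] Fs unfolding E2_def by auto
      next
        case False then show ?thesis using D Chk Uo unfolding E1_def by auto
      qed
    qed
    have dis: "E1 \<inter> E2 \<inter> C = {}" using DF Uo unfolding E1_def E2_def by blast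
    have n2: "E2 \<inter> C \<noteq> {}" using B Chk BF Fs BW unfolding E2_def by blast
    have "q \<in> X closure_of (\<Union>C)" using q(1) unfolding F_def .
    moreover have "q \<in> Uo" using qW Uo by auto
    ultimately obtain y where y: "y \<in> \<Union>C" "y \<in> Uo" using Uo(1) unfolding in_closure_of by blast
    then obtain D where "D \<in> C" "y \<in> D" by auto
    then have n1: "E1 \<inter> C \<noteq> {}" using y Chk unfolding E1_def by blast
    show False using connectedinD[OF conn o1 o2 cov dis n1 n2] .
  qed
  ultimately show ?thesis using Fc Bc by blast
qed

theorem proposition7p1:
  fixes X :: "'a topology"
  assumes "Hausdorff_space X"
    and "hereditarily_disconnected_space X"
  shows "(\<exists>C. connectedin (vietoris X) C \<and> (\<exists>A B. A \<in> C \<and> B \<in> C \<and> A \<noteq> B))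
     \<longleftrightarrow> (\<exists>F K. closedin X F \<and> compactin X K \<and> K \<subset> F \<and>
            (\<forall>Q \<in> quasi_components_of (subtopology X F). K \<inter> Q \<noteq> {}))"
proof
  assume "\<exists>C. connectedin (vietoris X) C \<and> (\<exists>A B. A \<in> C \<and> B \<in> C \<and> A \<noteq> B)"
  then obtain C A B where C: "connectedin (vietoris X) C" "A \<in> C" "B \<in> C" "A \<noteq> B" by blast
  have "\<not> A \<subseteq> B \<or> \<not> B \<subseteq> A" using C(4) by (simp add: subset_antisym)
  then obtain p where "(p \<in> A \<and> p \<notin> B) \<or> (p \<in> B \<and> p \<notin> A)" by auto
  then show "\<exists>F K. closedin X F \<and> compactin X K \<and> K \<subset> F \<and>
            (\<forall>Q \<in> quasi_components_of (subtopology X F). K \<inter> Q \<noteq> {})"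
  proof
    assume h: "p \<in> A \<and> p \<notin> B"
    then have "p \<in> A" "p \<notin> B" by auto
    then show ?thesis by (rule forward[OF C(1) C(2) C(3)])
  next
    assume h: "p \<in> B \<and> p \<notin> A"
    then have "p \<in> B" "p \<notin> A" by auto
    then show ?thesis by (rule forward[OF C(1) C(3) C(2)])
  qed
next
  assume "\<exists>F K. closedin X F \<and> compactin X K \<and> K \<subset> F \<and>
            (\<forall>Q \<in> quasi_components_of (subtopology X F). K \<inter> Q \<noteq> {})"
  then obtain F K where FK: "closedin X F" "compactin X K" "K \<subset> F"
     "\<forall>Q \<in> quasi_components_of (subtopology X F). K \<inter> Q \<noteq> {}" by blast
  show "\<exists>C. connectedin (vietoris X) C \<and> (\<exists>A B. A \<in> C \<and> B \<in> C \<and> A \<noteq> B)"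
    by (rule backward[OF FK])
qed

end
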